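(* Let $b$ be a Baer subline of $\ell_\infty$ in $\mathrm{PG}(2,q^2)$, and let $\bar P,\bar Q\in\ell_\infty$ be distinct points that are conjugate with respect to $b$. Then in $\mathrm{PG}(4,q^2)$ the lines $PQ^q$ and $P^qQ$ are lines of the extended regulus $[b]^\star$.
   Context: Bruck–Bose setting: $q$ a prime power; $\Sigma_\infty$ a hyperplane of $\mathrm{PG}(4,q)$ with a regular spread $\mathcal S$ whose lines $[T]$ correspond to the points $\bar T\in\ell_\infty$ of $\mathrm{PG}(2,q^2)$. In $\mathrm{PG}(4,q^2)$ the transversals of $\mathcal S$ are the two conjugate lines $g,g^q$ (conjugation $X\mapsto X^q$ on coordinates) such that for each $\bar T\in\ell_\infty$, with $T:=[T]^\star\cap g$, the extended spread line is $[T]^\star=TT^q$; this gives a bijection $\bar T\leftrightarrow T$ between $\ell_\infty$ and $g$. A Baer subline $b$ of $\ell_\infty$ corresponds to the regulus $[b]=\{[T]:\bar T\in b\}$ contained in $\mathcal S$; $[b]^\star$ denotes the regulus of $\Sigma_\infty^\star$ consisting of the $q^2+1$ lines of the same ruling of the extended hyperbolic quadric (the quadric covered by $[b]$, extended to $\mathrm{PG}(4,q^2)$) that contains the extensions of the lines of $[b]$. Two points of $\ell_\infty$ are conjugate with respect to $b$ if they are interchanged by the unique involutory (semilinear) collineation of $\ell_\infty$ fixing $b$ pointwise. *)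

theory Defs
  imports "HOL-Analysis.Finite_Cartesian_Product" "HOL-Computational_Algebra.Primes"
begin

section \<open>Coordinates\<close>

text \<open>K = GF(q^2) is a finite field type 'a with CARD('a) = q^2.  Points of PG(n,q^2) are
nonzero vectors of 'a^'n (up to nonzero scalars); the Baer subgeometry PG(n,q) consists of
the points with all coordinates in GF(q).  Conjugation is X |-> X^q on coordinates.\<close>

definition vconj :: "nat \<Rightarrow> 'a::field ^'n \<Rightarrow> 'a ^'n" where
  "vconj q v = (\<chi> i. (v $ i) ^ q)"

text \<open>A vector with all coordinates in GF(q) (i.e. fixed by conjugation).\<close>
definition rational :: "nat \<Rightarrow> 'a::field ^'n \<Rightarrow> bool" where
  "rational q v \<longleftrightarrow> vconj q v = v"

text \<open>Two nonzero vectors represent the same projective point.\<close>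
definition same_point :: "'a::field ^'n \<Rightarrow> 'a ^'n \<Rightarrow> bool" where
  "same_point u v \<longleftrightarrow> u \<noteq> 0 \<and> v \<noteq> 0 \<and> (\<exists>c. c \<noteq> 0 \<and> u = c *s v)"

definition lin_indep2 :: "'a::field ^'n \<Rightarrow> 'a ^'n \<Rightarrow> bool" where
  "lin_indep2 u v \<longleftrightarrow> (\<forall>a b. a *s u + b *s v = 0 \<longrightarrow> a = 0 \<and> b = 0)"

text \<open>The (vector-space) span of two vectors; the line joining two distinct points.\<close>
definition span2 :: "'a::field ^'n \<Rightarrow> 'a ^'n \<Rightarrow> ('a ^'n) set" where
  "span2 u v = {a *s u + b *s v | a b. True}"

text \<open>Lines of PG(n,q^2), as 2-dimensional subspaces.\<close>
definition is_line :: "('a::field ^'n) set \<Rightarrow> bool" where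
  "is_line L \<longleftrightarrow> (\<exists>u v. lin_indep2 u v \<and> L = span2 u v)"

text \<open>(Extensions to PG(n,q^2) of) lines of the subgeometry PG(n,q).\<close>
definition is_rational_line :: "nat \<Rightarrow> ('a::field ^'n) set \<Rightarrow> bool" where
  "is_rational_line q L \<longleftrightarrow>
     (\<exists>u v. rational q u \<and> rational q v \<and> lin_indep2 u v \<and> L = span2 u v)"

definition meets :: "('a::field ^'n) set \<Rightarrow> ('a ^'n) set \<Rightarrow> bool" where
  "meets L M \<longleftrightarrow> (\<exists>z. z \<noteq> 0 \<and> z \<in> L \<and> z \<in> M)"

definition field_aut :: "('a::field \<Rightarrow> 'a) \<Rightarrow> bool" where
  "field_aut \<theta> \<longleftrightarrow> bij \<theta> \<and> (\<forall>x y. \<theta> (x + y) = \<theta> x + \<theta> y) \<and> (\<forall>x y. \<theta> (x * y) = \<theta> x * \<theta> y)"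

text \<open>Semilinear map x |-> A x^\<theta>.\<close>
definition semilin :: "'a::field ^'n^'m \<Rightarrow> ('a \<Rightarrow> 'a) \<Rightarrow> 'a ^'n \<Rightarrow> 'a ^'m" where
  "semilin A \<theta> x = A *v (\<chi> i. \<theta> (x $ i))"

definition nonsingular :: "'a::field ^'n^'m \<Rightarrow> bool" where
  "nonsingular A \<longleftrightarrow> (\<forall>x. A *v x = 0 \<longrightarrow> x = 0)"

section \<open>The line at infinity l_inf = PG(1,q^2): Baer sublines and conjugacy\<close>

text \<open>A Baer subline of PG(1,q^2): the image of PG(1,q) under a projectivity
(as a set of vectors, closed under nonzero scalars).\<close>
definition baer_subline :: "nat \<Rightarrow> ('a::field ^2) set \<Rightarrow> bool" where
  "baer_subline q b \<longleftrightarrow> (\<exists>M :: 'a^2^2. nonsingular M \<and>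
      b = {c *s (M *v r) | c r. c \<noteq> 0 \<and> r \<noteq> 0 \<and> rational q r})"

text \<open>P and Q are conjugate w.r.t. b: they are interchanged by an involutory collineation
of PG(1,q^2) (induced by a nonsingular semilinear map) fixing b pointwise.  (This collineation
is unique.)\<close>
definition conjugate_wrt :: "('a::field ^2) set \<Rightarrow> 'a ^2 \<Rightarrow> 'a ^2 \<Rightarrow> bool" where
  "conjugate_wrt b P Q \<longleftrightarrow> (\<exists>(A :: 'a^2^2) \<theta>. nonsingular A \<and> field_aut \<theta> \<and>
      (\<forall>x. x \<noteq> 0 \<longrightarrow> same_point (semilin A \<theta> (semilin A \<theta> x)) x) \<and>
      (\<forall>x\<in>b. same_point (semilin A \<theta> x) x) \<and>
      same_point (semilin A \<theta> P) Q \<and> same_point (semilin A \<theta> Q) P)"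

section \<open>Bruck--Bose: reguli in Sigma_inf\<close>

text \<open>With \<phi> the bijection Tbar |-> T from l_inf onto the transversal g, the extended spread
line is [T]* = T T^q.\<close>
definition spread_line :: "nat \<Rightarrow> ('a::field ^2 \<Rightarrow> 'a ^5) \<Rightarrow> 'a ^2 \<Rightarrow> ('a ^5) set" where
  "spread_line q \<phi> x = span2 (\<phi> x) (vconj q (\<phi> x))"

text \<open>Lines of PG(4,q) meeting every line of the regulus [b] (the opposite regulus).\<close>
definition opposite_regulus :: "nat \<Rightarrow> ('a::field ^2 \<Rightarrow> 'a ^5) \<Rightarrow> ('a ^2) set \<Rightarrow> ('a ^5) set set" where
  "opposite_regulus q \<phi> b =
     {m. is_rational_line q m \<and> (\<forall>x\<in>b. meets m (spread_line q \<phi> x))}"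

text \<open>[b]*: the lines of PG(4,q^2) meeting (the extensions of) all lines of the opposite
regulus, i.e. the ruling of the extended hyperbolic quadric containing the extensions of the
lines of [b].\<close>
definition ext_regulus :: "nat \<Rightarrow> ('a::field ^2 \<Rightarrow> 'a ^5) \<Rightarrow> ('a ^2) set \<Rightarrow> ('a ^5) set set" where
  "ext_regulus q \<phi> b = {L. is_line L \<and> (\<forall>m\<in>opposite_regulus q \<phi> b. meets L m)}"

end

theory Submission
  imports Defs "HOL-Analysis.Cartesian_Space"
begin


lemma prime_pow_add:
  fixes x y :: "'a::comm_ring_1"
  assumes p: "prime p" and c: "of_nat p = (0::'a)"
  shows "(x + y) ^ p = x ^ p + y ^ p"
proof -
  have p0: "p \<noteq> 0" using p by auto
  have "(x + y) ^ p = (\<Sum>k\<le>p. of_nat (p choose k) * x ^ k * y ^ (p - k))"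
    by (rule binomial_ring)
  also have "\<dots> = (\<Sum>k\<in>{0,p}. of_nat (p choose k) * x ^ k * y ^ (p - k))"
  proof (rule sum.mono_neutral_right)
    show "finite {..p}" by simp
    show "{0, p} \<subseteq> {..p}" by auto
    show "\<forall>i\<in>{..p} - {0, p}. of_nat (p choose i) * x ^ i * y ^ (p - i) = 0"
    proof
      fix i assume i: "i \<in> {..p} - {0, p}"
      then have "p dvd (p choose i)" using dvd_choose_prime[of i p] p p0 by auto
      then obtain c' where "p choose i = p * c'" by blast
      then show "of_nat (p choose i) * x ^ i * y ^ (p - i) = 0" using c by simp
    qed
  qed
  also have "\<dots> = x ^ p + y ^ p" using p0 by (simp add: add.commute)
  finally show ?thesis .
qed

lemma prime_pow_pow_add:
  fixes x y :: "'a::comm_ring_1"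
  assumes p: "prime p" and c: "of_nat p = (0::'a)"
  shows "(x + y) ^ (p ^ k) = x ^ (p ^ k) + y ^ (p ^ k)"
proof (induction k)
  case 0 then show ?case by simp
next
  case (Suc k)
  have "(x + y) ^ (p ^ Suc k) = ((x + y) ^ (p ^ k)) ^ p"
    by (simp add: power_mult[symmetric] mult.commute)
  also have "\<dots> = (x ^ (p ^ k)) ^ p + (y ^ (p ^ k)) ^ p"
    using Suc prime_pow_add[OF p c] by simp
  also have "\<dots> = x ^ (p ^ Suc k) + y ^ (p ^ Suc k)"
    by (simp add: power_mult[symmetric] mult.commute)
  finally show ?case .
qed

lemma card_times_zero:
  fixes x :: "'a::{finite,ring_1}"
  shows "of_nat CARD('a) * x = 0"
proof -
  have "(\<Sum>y\<in>UNIV. x + y) = (\<Sum>y\<in>UNIV. y)"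
    by (rule sum.reindex_bij_witness[where i = "\<lambda>y. y - x" and j = "\<lambda>y. x + y"]) auto
  moreover have "(\<Sum>y\<in>UNIV. x + y) = of_nat CARD('a) * x + (\<Sum>y\<in>UNIV. y)"
    by (simp add: sum.distrib)
  ultimately show ?thesis by simp
qed

lemma card_power_eq:
  fixes x :: "'a::{finite,field}"
  shows "x ^ CARD('a) = x"
proof (cases "x = 0")
  case True then show ?thesis by simp
next
  case False
  let ?S = "UNIV - {0::'a}"
  have "(\<Prod>y\<in>?S. x * y) = (\<Prod>y\<in>?S. y)"
    by (rule prod.reindex_bij_witness[where i = "\<lambda>y. y / x" and j = "\<lambda>y. x * y"])
       (use False in auto)
  moreover have "(\<Prod>y\<in>?S. x * y) = x ^ card ?S * (\<Prod>y\<in>?S. y)"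
    by (simp add: prod.distrib)
  moreover have "(\<Prod>y\<in>?S. y) \<noteq> 0" by simp
  ultimately have "x ^ card ?S = 1" by simp
  moreover have "card ?S = CARD('a) - 1" by (simp add: card_Diff_singleton)
  moreover have "CARD('a) = Suc (CARD('a) - 1)" using finite_UNIV_card_ge_0[where 'a='a] by simp
  ultimately show ?thesis by (metis power_Suc mult.right_neutral mult.commute)
qed


definition frob_ok :: "nat \<Rightarrow> 'a::field itself \<Rightarrow> bool" where
  "frob_ok q _ \<longleftrightarrow> q > 0 \<and> (\<forall>x y::'a. (x + y) ^ q = x ^ q + y ^ q) \<and> (\<forall>x::'a. (x ^ q) ^ q = x)"

lemma frob_okI:
  assumes q_pp: "\<exists>p k. prime p \<and> k > 0 \<and> q = p ^ k"
    and card: "CARD('a::{finite,field}) = q ^ 2"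
  shows "frob_ok q TYPE('a)"
proof -
  obtain p k where p: "prime p" "k > 0" "q = p ^ k" using q_pp by blast
  have "of_nat CARD('a) * (1::'a) = 0" by (rule card_times_zero)
  then have "(of_nat p :: 'a) ^ (k * 2) = 0" using card p by (simp add: power_mult of_nat_power)
  then have c: "(of_nat p :: 'a) = 0" by simp
  have "q > 0" using p prime_gt_0_nat by simp
  moreover have "\<forall>x y::'a. (x + y) ^ q = x ^ q + y ^ q" using prime_pow_pow_add[OF p(1) c] p by simp
  moreover have "\<forall>x::'a. (x ^ q) ^ q = x" using card_power_eq[where 'a='a] card by (simp add: power_mult[symmetric] power2_eq_square)
  ultimately show ?thesis unfolding frob_ok_def by simp
qed

context
  fixes q :: nat
  assumes F: "frob_ok q TYPE('a::field)"
begin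

lemma fr_add: "((x::'a) + y) ^ q = x ^ q + y ^ q" using F unfolding frob_ok_def by blast
lemma fr_inv[simp]: "((x::'a) ^ q) ^ q = x" using F unfolding frob_ok_def by blast
lemma fr_pos: "q > 0" using F unfolding frob_ok_def by blast
lemma fr_0[simp]: "(0::'a) ^ q = 0" using fr_pos by simp
lemma fr_eq0[simp]: "((x::'a) ^ q = 0) \<longleftrightarrow> x = 0" using fr_pos by simp
lemma fr_minus: "(- (x::'a)) ^ q = - (x ^ q)"
proof -
  have "(x + - x) ^ q = x ^ q + (- x) ^ q" by (rule fr_add)
  then show ?thesis by (simp add: eq_neg_iff_add_eq_0 add.commute)
qed
lemma fr_diff: "((x::'a) - y) ^ q = x ^ q - y ^ q"
  using fr_add[of x "- y"] fr_minus[of y] by simp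
lemma fr_inj: "((x::'a) ^ q = y ^ q) \<longleftrightarrow> x = y"
  by (metis fr_inv)

lemma fr_sum: "(sum (f::_\<Rightarrow>'a) S) ^ q = sum (\<lambda>i. f i ^ q) S"
  by (induction S rule: infinite_finite_induct) (auto simp: fr_add)

lemma vconj_add: "vconj q ((u::'a^'n) + v) = vconj q u + vconj q v"
  by (simp add: vconj_def vec_eq_iff fr_add)
lemma vconj_scale: "vconj q (c *s (u::'a^'n)) = c ^ q *s vconj q u"
  by (simp add: vconj_def vec_eq_iff power_mult_distrib)
lemma vconj_vconj[simp]: "vconj q (vconj q (u::'a^'n)) = u"
  by (simp add: vconj_def vec_eq_iff)
lemma vconj_zero[simp]: "vconj q (0::'a^'n) = 0"
  by (simp add: vconj_def vec_eq_iff)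
lemma vconj_eq0[simp]: "vconj q (u::'a^'n) = 0 \<longleftrightarrow> u = 0"
  using fr_pos by (simp add: vconj_def vec_eq_iff)
lemma vconj_minus: "vconj q (- (u::'a^'n)) = - vconj q u"
  by (simp add: vconj_def vec_eq_iff fr_minus)
lemma vconj_diff: "vconj q ((u::'a^'n) - v) = vconj q u - vconj q v"
  by (simp add: vconj_def vec_eq_iff fr_diff)

end

lemma mv_add: "(B::'a::comm_ring_1^'n^'m) *v (x + y) = B *v x + B *v y"
  by (simp add: matrix_vector_mult_def vec_eq_iff sum.distrib algebra_simps)
lemma mv_scale: "(B::'a::comm_ring_1^'n^'m) *v (c *s x) = c *s (B *v x)"
  by (simp add: matrix_vector_mult_def vec_eq_iff sum_distrib_left algebra_simps)
lemma mv_minus: "(B::'a::comm_ring_1^'n^'m) *v (- x) = - (B *v x)"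
  by (simp add: matrix_vector_mult_def vec_eq_iff sum_negf)
lemma mv_diff: "(B::'a::comm_ring_1^'n^'m) *v (x - y) = B *v x - B *v y"
  by (simp add: matrix_vector_mult_def vec_eq_iff sum_subtractf algebra_simps)



definition det2 :: "'a::comm_ring_1^2 \<Rightarrow> 'a^2 \<Rightarrow> 'a" where
  "det2 u v = u$1 * v$2 - u$2 * v$1"

definition vec2 :: "'a \<Rightarrow> 'a \<Rightarrow> 'a^2" where
  "vec2 a b = (\<chi> i. if i = 1 then a else b)"

lemma vec2_nth[simp]: "vec2 a b $ 1 = a" "vec2 a b $ 2 = b"
  by (simp_all add: vec2_def)

lemma v2_eq: "((x::'a^2) = y) \<longleftrightarrow> x$1 = y$1 \<and> x$2 = y$2"
  by (simp add: vec_eq_iff forall_2)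

lemma det2_indep:
  fixes u v :: "'a::field^2"
  assumes d: "det2 u v \<noteq> 0" and e: "a *s u + b *s v = 0"
  shows "a = 0 \<and> b = 0"
proof -
  have e1: "a * u$1 + b * v$1 = 0" and e2: "a * u$2 + b * v$2 = 0"
    using e by (simp_all add: v2_eq)
  have "a * det2 u v = v$2 * (a * u$1 + b * v$1) - v$1 * (a * u$2 + b * v$2)"
    by (simp add: det2_def algebra_simps)
  then have "a * det2 u v = 0" using e1 e2 by simp
  moreover have "b * det2 u v = u$1 * (a * u$2 + b * v$2) - u$2 * (a * u$1 + b * v$1)"
    by (simp add: det2_def algebra_simps)
  then have "b * det2 u v = 0" using e1 e2 by simp
  ultimately show ?thesis using d by simp
qed

lemma det2_lin_indep2:
  fixes u v :: "'a::field^2"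
  shows "det2 u v \<noteq> 0 \<Longrightarrow> lin_indep2 u v"
  using det2_indep unfolding lin_indep2_def by blast

lemma indep_det2:
  fixes u v :: "'a::field^2"
  assumes li: "lin_indep2 u v"
  shows "det2 u v \<noteq> 0"
proof
  assume d: "det2 u v = 0"
  have "v$2 *s u + (- (u$2)) *s v = 0" using d by (simp add: v2_eq det2_def algebra_simps)
  then have "v$2 = 0 \<and> - (u$2) = 0" using li unfolding lin_indep2_def by blast
  then have a: "v$2 = 0 \<and> u$2 = 0" by simp
  have "v$1 *s u + (- (u$1)) *s v = 0" using d by (simp add: v2_eq det2_def algebra_simps)
  then have "v$1 = 0 \<and> - (u$1) = 0" using li unfolding lin_indep2_def by blast
  then have b: "v$1 = 0 \<and> u$1 = 0" by simp
  have "1 *s u + 0 *s v = 0" using a b by (simp add: v2_eq)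
  then have "(1::'a) = 0" using li unfolding lin_indep2_def by blast
  then show False by simp
qed

lemma div_comb: "(a::'a::field) / d * u + b / d * v = (a * u + b * v) / d"
  by (simp add: add_divide_distrib)

lemma det2_span:
  fixes u v x :: "'a::field^2"
  assumes d: "det2 u v \<noteq> 0"
  shows "\<exists>a b. x = a *s u + b *s v"
proof -
  let ?d = "det2 u v"
  let ?a = "(x$1 * v$2 - x$2 * v$1) / ?d" and ?b = "(u$1 * x$2 - u$2 * x$1) / ?d"
  have c1: "?a * u$1 + ?b * v$1 = x$1"
  proof -
    have "?a * u$1 + ?b * v$1 = ((x$1 * v$2 - x$2 * v$1) * u$1 + (u$1 * x$2 - u$2 * x$1) * v$1) / ?d"
      by (rule div_comb)
    also have "(x$1 * v$2 - x$2 * v$1) * u$1 + (u$1 * x$2 - u$2 * x$1) * v$1 = x$1 * ?d"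
      by (simp add: det2_def algebra_simps)
    finally show ?thesis using d by simp
  qed
  have c2: "?a * u$2 + ?b * v$2 = x$2"
  proof -
    have "?a * u$2 + ?b * v$2 = ((x$1 * v$2 - x$2 * v$1) * u$2 + (u$1 * x$2 - u$2 * x$1) * v$2) / ?d"
      by (rule div_comb)
    also have "(x$1 * v$2 - x$2 * v$1) * u$2 + (u$1 * x$2 - u$2 * x$1) * v$2 = x$2 * ?d"
      by (simp add: det2_def algebra_simps)
    finally show ?thesis using d by simp
  qed
  have "x = ?a *s u + ?b *s v" using c1 c2 by (simp add: v2_eq)
  then show ?thesis by blast
qed

definition vth :: "('a \<Rightarrow> 'a) \<Rightarrow> 'a^'n \<Rightarrow> 'a^'n" where
  "vth \<theta> v = (\<chi> i. \<theta> (v $ i))"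

lemma vth_nth[simp]: "vth \<theta> v $ i = \<theta> (v $ i)" by (simp add: vth_def)

context
  fixes \<theta> :: "'a::field \<Rightarrow> 'a"
  assumes A: "field_aut \<theta>"
begin

lemma th_add: "\<theta> (x + y) = \<theta> x + \<theta> y" using A unfolding field_aut_def by blast
lemma th_mult: "\<theta> (x * y) = \<theta> x * \<theta> y" using A unfolding field_aut_def by blast
lemma th_bij: "bij \<theta>" using A unfolding field_aut_def by blast
lemma th_0[simp]: "\<theta> 0 = 0"
proof -
  have "\<theta> 0 + \<theta> 0 = \<theta> 0 + 0" using th_add[of 0 0] by simp
  then show ?thesis by (rule add_left_imp_eq)
qed
lemma th_inj: "\<theta> x = \<theta> y \<longleftrightarrow> x = y" using th_bij by (metis bij_def injD)
lemma th_eq0[simp]: "\<theta> x = 0 \<longleftrightarrow> x = 0" using th_inj[of x 0] by simp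
lemma th_1[simp]: "\<theta> 1 = 1"
proof -
  have "\<theta> 1 = \<theta> 1 * \<theta> 1" using th_mult[of 1 1] by simp
  moreover have "\<theta> 1 \<noteq> 0" by simp
  ultimately show ?thesis by (metis mult_cancel_left1)
qed
lemma th_minus: "\<theta> (- x) = - \<theta> x"
  using th_add[of x "- x"] by (simp add: eq_neg_iff_add_eq_0 add.commute)
lemma th_diff: "\<theta> (x - y) = \<theta> x - \<theta> y"
  using th_add[of x "- y"] th_minus[of y] by simp
lemma th_pow: "\<theta> (x ^ n) = \<theta> x ^ n"
  by (induction n) (simp_all add: th_mult)
lemma th_surj: "\<exists>x. y = \<theta> x" using th_bij by (metis bij_def surjD)

lemma vth_add: "vth \<theta> (u + v) = vth \<theta> u + vth \<theta> (v::'a^'n)"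
  by (simp add: vec_eq_iff th_add)
lemma vth_scale: "vth \<theta> (c *s v) = \<theta> c *s vth \<theta> (v::'a^'n)"
  by (simp add: vec_eq_iff th_mult)
lemma vth_eq0[simp]: "vth \<theta> (v::'a^'n) = 0 \<longleftrightarrow> v = 0"
  by (simp add: vec_eq_iff)
lemma det2_vth: "det2 (vth \<theta> u) (vth \<theta> v) = \<theta> (det2 u v)"
  by (simp add: det2_def th_diff th_mult)

end

definition Dd :: "nat \<Rightarrow> 'a::field^'n^'m \<Rightarrow> 'a^'n \<Rightarrow> 'a^'n \<Rightarrow> 'a^'m" where
  "Dd q B s t = B *v s + vconj q (B *v t)"

context
  fixes q :: nat and B :: "'a::field^'n^'m"
  assumes F: "frob_ok q TYPE('a)"
begin

lemma Dd_add: "Dd q B s t + Dd q B s' t' = Dd q B (s + s') (t + t')"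
  by (simp add: Dd_def mv_add vconj_add[OF F] algebra_simps)

lemma Dd_scale: "c *s Dd q B s t = Dd q B (c *s s) (c ^ q *s t)"
  by (simp add: Dd_def mv_scale vconj_scale[OF F] vector_add_ldistrib power_mult_distrib
       fr_inv[OF F])

lemma Dd_diff: "Dd q B s t - Dd q B s' t' = Dd q B (s - s') (t - t')"
  by (simp add: Dd_def mv_diff vconj_diff[OF F] algebra_simps)

lemma Dd_conj: "vconj q (Dd q B s t) = Dd q B t s"
  by (simp add: Dd_def vconj_add[OF F] vconj_vconj[OF F] add.commute)

lemma Dd_zero:
  assumes ns: "nonsingular B" and sk: "\<forall>x y. B *v x = vconj q (B *v y) \<longrightarrow> B *v x = 0"
    and z: "Dd q B s t = 0"
  shows "s = 0 \<and> t = 0"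
proof -
  have "B *v s = - vconj q (B *v t)" using z unfolding Dd_def by (simp add: eq_neg_iff_add_eq_0)
  also have "\<dots> = vconj q (B *v (- t))" by (simp add: mv_minus vconj_minus[OF F])
  finally have "B *v s = 0" using sk by blast
  then have s: "s = 0" using ns unfolding nonsingular_def by blast
  then have "vconj q (B *v t) = 0" using z unfolding Dd_def by simp
  then have "B *v t = 0" using vconj_eq0[OF F] by blast
  then show ?thesis using s ns unfolding nonsingular_def by blast
qed

lemma Dd_eq:
  assumes ns: "nonsingular B" and sk: "\<forall>x y. B *v x = vconj q (B *v y) \<longrightarrow> B *v x = 0"
    and z: "Dd q B s t = Dd q B s' t'"
  shows "s = s' \<and> t = t'"
  using Dd_zero[OF ns sk, of "s - s'" "t - t'"] Dd_diff[of s t s' t'] z by simp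

end



lemma det2_comb: "det2 (a *s u + b *s v) (c *s u + d *s (v::'a::comm_ring_1^2)) = (a*d - b*c) * det2 u v"
  by (simp add: det2_def algebra_simps)

lemma comb_scale: "c *s ((a::'a::comm_ring_1) *s u + b *s v) = (c * a) *s u + (c * b) *s v"
  by (simp add: vector_add_ldistrib vector_smult_assoc)

lemma comb_add: "((a::'a::comm_ring_1) *s u + b *s v) + (c *s u + d *s v) = (a + c) *s u + (b + d) *s v"
  by (simp add: vector_sadd_rdistrib algebra_simps)

lemma comb_diff: "((a::'a::comm_ring_1) *s u + b *s v) - (c *s u + d *s v) = (a - c) *s u + (b - d) *s v"
  by (simp add: vec_eq_iff algebra_simps)

lemma core2:
  fixes u1 u2 y1 y2 :: "'a::field^2"
  assumes F: "frob_ok q TYPE('a)"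
    and dy: "det2 y1 y2 \<noteq> 0"
    and inj: "\<And>a b. a *s u1 + b *s u2 = 0 \<Longrightarrow> a^q *s u1 + b^q *s u2 = 0 \<Longrightarrow> a = 0 \<and> b = 0"
    and fx: "\<And>y. y \<in> {y1, y2, y1 + y2} \<Longrightarrow> \<exists>a b \<alpha> \<beta>. (a \<noteq> 0 \<or> b \<noteq> 0) \<and>
               a *s u1 + b *s u2 = \<alpha> *s y \<and> a^q *s u1 + b^q *s u2 = \<beta> *s y"
    and xi: "\<xi>1 *s y1 + \<xi>2 *s y2 \<noteq> 0"
  shows "\<exists>a b \<alpha> \<beta>. (a \<noteq> 0 \<or> b \<noteq> 0) \<and> a *s u1 + b *s u2 = \<alpha> *s (\<xi>1 *s y1 + \<xi>2 *s y2)
           \<and> a^q *s u1 + b^q *s u2 = \<beta> *s (\<xi>1^q *s y1 + \<xi>2^q *s y2)"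
proof -
  have y1nz: "y1 \<noteq> 0" and y2nz: "y2 \<noteq> 0" using dy by (auto simp: det2_def)
  have pre: "\<exists>c d. c *s u1 + d *s u2 = y" if y: "y \<in> {y1, y2, y1 + y2}" for y
  proof -
    obtain a b \<alpha> \<beta> where ab: "a \<noteq> 0 \<or> b \<noteq> 0" and e1: "a *s u1 + b *s u2 = \<alpha> *s y"
      and e2: "a^q *s u1 + b^q *s u2 = \<beta> *s y" using fx[OF y] by blast
    show ?thesis
    proof (cases "\<alpha> = 0")
      case False
      have "(a / \<alpha>) *s u1 + (b / \<alpha>) *s u2 = (1 / \<alpha>) *s (a *s u1 + b *s u2)"
        by (simp add: comb_scale)
      also have "\<dots> = y" using e1 False by (simp add: vector_smult_assoc)
      finally show ?thesis by blast
    next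
      case True
      have "\<beta> \<noteq> 0" using True inj[of a b] e1 e2 ab by auto
      have "(a^q / \<beta>) *s u1 + (b^q / \<beta>) *s u2 = (1 / \<beta>) *s (a^q *s u1 + b^q *s u2)"
        by (simp add: comb_scale)
      also have "\<dots> = y" using e2 \<open>\<beta> \<noteq> 0\<close> by (simp add: vector_smult_assoc)
      finally show ?thesis by blast
    qed
  qed
  obtain c1 d1 where cd1: "c1 *s u1 + d1 *s u2 = y1" using pre by blast
  obtain c2 d2 where cd2: "c2 *s u1 + d2 *s u2 = y2" using pre by blast
  have "det2 y1 y2 = (c1 * d2 - d1 * c2) * det2 u1 u2"
    using cd1 cd2 det2_comb by metis
  then have du: "det2 u1 u2 \<noteq> 0" using dy by auto
  have key: "\<exists>sa sb l. sa *s u1 + sb *s u2 = y \<and> sa^q *s u1 + sb^q *s u2 = l *s y"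
    if y: "y \<in> {y1, y2, y1 + y2}" for y
  proof -
    obtain a b \<alpha> \<beta> where ab: "a \<noteq> 0 \<or> b \<noteq> 0" and e1: "a *s u1 + b *s u2 = \<alpha> *s y"
      and e2: "a^q *s u1 + b^q *s u2 = \<beta> *s y" using fx[OF y] by blast
    have an: "\<alpha> \<noteq> 0"
    proof
      assume "\<alpha> = 0"
      then have "a *s u1 + b *s u2 = 0" using e1 by simp
      then show False using det2_indep[OF du] ab by blast
    qed
    have "(a / \<alpha>) *s u1 + (b / \<alpha>) *s u2 = (1 / \<alpha>) *s (a *s u1 + b *s u2)"
      by (simp add: comb_scale)
    also have "\<dots> = y" using e1 an by (simp add: vector_smult_assoc)
    finally have s1: "(a / \<alpha>) *s u1 + (b / \<alpha>) *s u2 = y" .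
    have "(a / \<alpha>)^q *s u1 + (b / \<alpha>)^q *s u2 = (1 / \<alpha>^q) *s (a^q *s u1 + b^q *s u2)"
      by (simp add: comb_scale power_divide)
    also have "\<dots> = (\<beta> / \<alpha>^q) *s y" using e2 by (simp add: vector_smult_assoc)
    finally show ?thesis using s1 by blast
  qed
  obtain s1a s1b l1 where k1: "s1a *s u1 + s1b *s u2 = y1" "s1a^q *s u1 + s1b^q *s u2 = l1 *s y1"
    using key by blast
  obtain s2a s2b l2 where k2: "s2a *s u1 + s2b *s u2 = y2" "s2a^q *s u1 + s2b^q *s u2 = l2 *s y2"
    using key by blast
  obtain s3a s3b l3 where k3: "s3a *s u1 + s3b *s u2 = y1 + y2" "s3a^q *s u1 + s3b^q *s u2 = l3 *s (y1 + y2)"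
    using key by blast
  have "(s3a - (s1a + s2a)) *s u1 + (s3b - (s1b + s2b)) *s u2 = 0"
    using k1(1) k2(1) k3(1) comb_add[of s1a u1 s1b u2 s2a s2b] comb_diff[of s3a u1 s3b u2 "s1a + s2a" "s1b + s2b"]
    by simp
  then have "s3a - (s1a + s2a) = 0 \<and> s3b - (s1b + s2b) = 0" using det2_indep[OF du] by blast
  then have s3: "s3a = s1a + s2a" "s3b = s1b + s2b" by simp_all
  have "l3 *s (y1 + y2) = (s1a^q + s2a^q) *s u1 + (s1b^q + s2b^q) *s u2"
    using k3(2) s3 by (simp add: fr_add[OF F])
  also have "\<dots> = l1 *s y1 + l2 *s y2" using k1(2) k2(2) comb_add by metis
  finally have "(l1 - l3) *s y1 + (l2 - l3) *s y2 = 0"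
    by (simp add: vec_eq_iff algebra_simps)
  then have "l1 - l3 = 0 \<and> l2 - l3 = 0" using det2_indep[OF dy] by blast
  then have l: "l2 = l1" by simp
  let ?a = "\<xi>1 * s1a + \<xi>2 * s2a" and ?b = "\<xi>1 * s1b + \<xi>2 * s2b"
  have r1: "?a *s u1 + ?b *s u2 = 1 *s (\<xi>1 *s y1 + \<xi>2 *s y2)"
  proof -
    have "?a *s u1 + ?b *s u2 = \<xi>1 *s (s1a *s u1 + s1b *s u2) + \<xi>2 *s (s2a *s u1 + s2b *s u2)"
      by (simp add: comb_scale comb_add)
    then show ?thesis using k1(1) k2(1) by simp
  qed
  have r2: "?a^q *s u1 + ?b^q *s u2 = l1 *s (\<xi>1^q *s y1 + \<xi>2^q *s y2)"
  proof -
    have "?a^q *s u1 + ?b^q *s u2 = \<xi>1^q *s (s1a^q *s u1 + s1b^q *s u2) + \<xi>2^q *s (s2a^q *s u1 + s2b^q *s u2)"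
      by (simp add: comb_scale comb_add fr_add[OF F] power_mult_distrib)
    also have "\<dots> = l1 *s (\<xi>1^q *s y1 + \<xi>2^q *s y2)" using k1(2) k2(2) l
      by (simp add: vector_smult_assoc vector_add_ldistrib mult.commute)
    finally show ?thesis .
  qed
  have "?a \<noteq> 0 \<or> ?b \<noteq> 0" using r1 xi by auto
  then show ?thesis using r1 r2 by blast
qed



lemma sp_intro: "u \<noteq> 0 \<Longrightarrow> v \<noteq> 0 \<Longrightarrow> c \<noteq> 0 \<Longrightarrow> u = c *s v \<Longrightarrow> same_point u v"
  unfolding same_point_def by blast

lemma sp_elim: "same_point u v \<Longrightarrow> \<exists>c. c \<noteq> 0 \<and> u = c *s v"
  unfolding same_point_def by blast

lemma vec2_decomp: "vec2 a b = a *s vec2 1 0 + b *s vec2 (0::'a::comm_ring_1) 1"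
  by (simp add: v2_eq)

lemma Mv2: "(M::'a::comm_ring_1^2^2) *v vec2 a b = a *s (M *v vec2 1 0) + b *s (M *v vec2 0 1)"
  by (subst vec2_decomp) (simp add: mv_add mv_scale)

lemma vconj_vec2: "vconj q (vec2 a b) = vec2 (a^q) (b^q)"
  by (simp add: v2_eq vconj_def)

lemma vec2_eq0: "vec2 a b = 0 \<longleftrightarrow> a = 0 \<and> b = 0"
  by (simp add: v2_eq)

lemma semilin_lin:
  assumes A: "field_aut \<theta>"
  shows "semilin A \<theta> (a *s u + b *s v) = \<theta> a *s semilin A \<theta> u + \<theta> b *s semilin A \<theta> v"
proof -
  have "(\<chi> i. \<theta> ((a *s u + b *s v) $ i)) = \<theta> a *s (\<chi> i. \<theta> (u $ i)) + \<theta> b *s (\<chi> i. \<theta> (v $ i))"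
    by (simp add: vec_eq_iff th_add[OF A] th_mult[OF A])
  then show ?thesis unfolding semilin_def by (simp add: mv_add mv_scale)
qed

lemma conj_form:
  fixes M :: "'a::field^2^2" and P Q :: "'a^2"
  assumes F: "frob_ok q TYPE('a)" and Mns: "nonsingular M"
    and bdef: "b = {c *s (M *v r) | c r. c \<noteq> 0 \<and> r \<noteq> 0 \<and> rational q r}"
    and cj: "conjugate_wrt b P Q" and PQ: "\<not> same_point P Q" and Pnz: "P \<noteq> 0" and Qnz: "Q \<noteq> 0"
  shows "\<exists>x1 x2 \<kappa>. \<kappa> \<noteq> 0 \<and> P = x1 *s (M *v vec2 1 0) + x2 *s (M *v vec2 0 1)
           \<and> Q = \<kappa> *s (x1^q *s (M *v vec2 1 0) + x2^q *s (M *v vec2 0 1))"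
proof -
  define m1 where "m1 = M *v vec2 1 0"
  define m2 where "m2 = M *v vec2 0 1"
  have qp: "q > 0" using fr_pos[OF F] .
  have Mv: "M *v vec2 a b = a *s m1 + b *s m2" for a b unfolding m1_def m2_def by (rule Mv2)
  have inb: "M *v r \<in> b" if "rational q r" "r \<noteq> 0" for r
  proof -
    have "\<exists>c r'. M *v r = c *s (M *v r') \<and> c \<noteq> 0 \<and> r' \<noteq> 0 \<and> rational q r'"
      using that by (intro exI[of _ 1] exI[of _ r]) simp
    then show ?thesis unfolding bdef by simp
  qed
  have rat: "rational q (vec2 1 t)" if "t^q = t" for t
    using that qp by (simp add: rational_def vconj_vec2)
  have li: "lin_indep2 m1 m2"
    unfolding lin_indep2_def
  proof (intro allI impI)
    fix a b assume "a *s m1 + b *s m2 = 0"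
    then have "M *v vec2 a b = 0" by (simp add: Mv)
    then have "vec2 a b = 0" using Mns unfolding nonsingular_def by blast
    then show "a = 0 \<and> b = 0" by (simp add: vec2_eq0)
  qed
  have dm: "det2 m1 m2 \<noteq> 0" using indep_det2[OF li] .
  have m1nz: "m1 \<noteq> 0" and m2nz: "m2 \<noteq> 0" using dm by (auto simp: det2_def)
  obtain A \<theta> where Ans: "nonsingular A" and A: "field_aut \<theta>"
    and fixb: "\<forall>x\<in>b. same_point (semilin A \<theta> x) x"
    and sPQ: "same_point (semilin A \<theta> P) Q"
    using cj unfolding conjugate_wrt_def by blast
  note thsimps[simp] = th_0[OF A] th_eq0[OF A] th_1[OF A]
  define \<sigma> where "\<sigma> = semilin A \<theta>"
  have lin: "\<sigma> (a *s u + b *s v) = \<theta> a *s \<sigma> u + \<theta> b *s \<sigma> v" for a b u v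
    unfolding \<sigma>_def by (rule semilin_lin[OF A])
  have fixM: "\<exists>c. c \<noteq> 0 \<and> \<sigma> (M *v vec2 1 t) = c *s (M *v vec2 1 t)" if "t^q = t" for t
    using fixb inb[OF rat[OF that]] sp_elim unfolding \<sigma>_def by (metis vec2_eq0 zero_neq_one)
  obtain l1 where l1: "l1 \<noteq> 0" "\<sigma> m1 = l1 *s m1"
    using fixM[of 0] qp by (auto simp: m1_def)
  have "M *v vec2 0 1 \<in> b" using inb[of "vec2 0 1"] qp by (simp add: rational_def vconj_vec2 vec2_eq0 power_0_left)
  then obtain l2 where l2: "l2 \<noteq> 0" "\<sigma> m2 = l2 *s m2"
    using fixb sp_elim unfolding \<sigma>_def m2_def by blast
  have s12: "\<sigma> (a *s m1 + b *s m2) = (\<theta> a * l1) *s m1 + (\<theta> b * l2) *s m2" for a b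
    using lin[of a m1 b m2] l1 l2 by (simp add: vector_smult_assoc)
  have l12: "l2 = l1"
  proof -
    obtain c where c: "c \<noteq> 0" "\<sigma> (M *v vec2 1 1) = c *s (M *v vec2 1 1)" using fixM[of 1] by auto
    have "(\<theta> 1 * l1) *s m1 + (\<theta> 1 * l2) *s m2 = c *s (1 *s m1 + 1 *s m2)"
      using c(2) s12[of 1 1] by (simp add: Mv)
    then have "(l1 - c) *s m1 + (l2 - c) *s m2 = 0"
      by (simp add: th_1[OF A] vec_eq_iff algebra_simps)
    then have "l1 - c = 0 \<and> l2 - c = 0" using li unfolding lin_indep2_def by blast
    then show ?thesis by simp
  qed
  have thfix: "\<theta> t = t" if tq: "t^q = t" for t
  proof -
    obtain c where c: "c \<noteq> 0" "\<sigma> (M *v vec2 1 t) = c *s (M *v vec2 1 t)" using fixM[OF tq] by auto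
    have "(\<theta> 1 * l1) *s m1 + (\<theta> t * l1) *s m2 = c *s (1 *s m1 + t *s m2)"
      using c(2) s12[of 1 t] l12 by (simp add: Mv)
    then have "(l1 - c) *s m1 + (\<theta> t * l1 - c * t) *s m2 = 0"
      by (simp add: th_1[OF A] vec_eq_iff algebra_simps)
    then have "l1 - c = 0 \<and> \<theta> t * l1 - c * t = 0" using li unfolding lin_indep2_def by blast
    then have "\<theta> t * c = t * c" by (metis mult.commute eq_iff_diff_eq_0)
    then show ?thesis using c(1) by simp
  qed
  obtain x1 x2 where P: "P = x1 *s m1 + x2 *s m2" using det2_span[OF dm] by blast
  obtain c where c: "c \<noteq> 0" "\<sigma> P = c *s Q" using sPQ sp_elim unfolding \<sigma>_def by blast
  define k where "k = l1 / c"
  have knz: "k \<noteq> 0" using l1 c by (simp add: k_def)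
  have Q: "Q = k *s (\<theta> x1 *s m1 + \<theta> x2 *s m2)"
  proof -
    have "c *s Q = (\<theta> x1 * l1) *s m1 + (\<theta> x2 * l1) *s m2" using c(2) s12 P l12 by simp
    then have "(1 / c) *s (c *s Q) = (1/c) *s ((\<theta> x1 * l1) *s m1 + (\<theta> x2 * l1) *s m2)" by simp
    then show ?thesis using c(1) by (simp add: vector_smult_assoc comb_scale k_def mult.commute)
  qed
  have x1nz: "x1 \<noteq> 0"
  proof
    assume x1: "x1 = 0"
    then have x2: "x2 \<noteq> 0" using Pnz P by auto
    have "P = (x2 / (k * \<theta> x2)) *s Q"
      using P Q x1 x2 knz by (simp add: vector_smult_assoc th_eq0[OF A])
    moreover have "x2 / (k * \<theta> x2) \<noteq> 0" using x2 knz by simp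
    ultimately have "same_point P Q" using sp_intro[OF Pnz Qnz] by blast
    then show False using PQ by blast
  qed
  define z where "z = x2 / x1"
  have x2z: "x2 = x1 * z" using x1nz by (simp add: z_def)
  define s where "s = z + z^q"
  define n where "n = z * z^q"
  have sq: "s^q = s" unfolding s_def by (simp add: fr_add[OF F] fr_inv[OF F] add.commute)
  have nq: "n^q = n" unfolding n_def by (simp add: power_mult_distrib fr_inv[OF F] mult.commute)
  have zeq: "z * z - s * z + n = 0" unfolding s_def n_def by (simp add: algebra_simps)
  define w where "w = \<theta> z"
  have "\<theta> (z * z - s * z + n) = w * w - s * w + n"
    using thfix[OF sq] thfix[OF nq]
    by (simp add: w_def th_add[OF A] th_diff[OF A] th_mult[OF A])
  then have "w * w - s * w + n = 0" using zeq th_0[OF A] by simp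
  then have "(w - z) * (w - z^q) = 0" unfolding s_def n_def by (simp add: algebra_simps)
  then have wz: "w = z \<or> w = z^q" by simp
  have thx2: "\<theta> x2 = \<theta> x1 * w" using x2z by (simp add: w_def th_mult[OF A])
  have Q2: "Q = (k * \<theta> x1) *s (m1 + w *s m2)"
    using Q thx2 by (simp add: vector_add_ldistrib vector_smult_assoc mult.assoc)
  have P2: "P = x1 *s (m1 + z *s m2)"
    using P x2z by (simp add: vector_add_ldistrib vector_smult_assoc)
  have "w \<noteq> z"
  proof
    assume "w = z"
    then have "P = (x1 / (k * \<theta> x1)) *s Q"
      using P2 Q2 knz x1nz by (simp add: vector_smult_assoc th_eq0[OF A])
    moreover have "x1 / (k * \<theta> x1) \<noteq> 0" using x1nz knz by simp
    ultimately have "same_point P Q" using sp_intro[OF Pnz Qnz] by blast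
    then show False using PQ by blast
  qed
  then have w: "w = z^q" using wz by blast
  have "Q = ((k * \<theta> x1) / x1^q) *s (x1^q *s m1 + x2^q *s m2)"
    using Q2 w x2z x1nz by (simp add: vector_add_ldistrib vector_smult_assoc power_mult_distrib)
  moreover have "(k * \<theta> x1) / x1^q \<noteq> 0" using knz x1nz by (simp add: th_eq0[OF A])
  ultimately show ?thesis using P unfolding m1_def m2_def by blast
qed



lemma in_span2: "z \<in> span2 u v \<longleftrightarrow> (\<exists>a b. z = a *s u + b *s v)"
  unfolding span2_def by blast

lemma span2_comm: "span2 u v = span2 v u"
  unfolding span2_def by (auto; metis add.commute)

lemma same_point_sym: "same_point (u::'a::field^'n) v \<Longrightarrow> same_point v u"
  unfolding same_point_def
  by (metis divide_eq_0_iff one_neq_zero vector_smult_assoc nonzero_divide_eq_eq mult.commute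
        vector_smult_lid)

lemma conj_sym: "conjugate_wrt b P Q \<Longrightarrow> conjugate_wrt b Q P"
  unfolding conjugate_wrt_def by blast

lemma indep_pair:
  fixes z1 z2 w1 w2 :: "'a::field^'n"
  assumes z1: "z1 = a1 *s w1 + b1 *s w2" and z2: "z2 = a2 *s w1 + b2 *s w2"
    and zi: "\<And>c1 c2. c1 *s z1 + c2 *s z2 = 0 \<Longrightarrow> c1 = 0 \<and> c2 = 0"
  shows "\<exists>e f g h. w1 = e *s z1 + f *s z2 \<and> w2 = g *s z1 + h *s z2"
proof -
  define d where "d = a1 * b2 - a2 * b1"
  have e1: "b2 *s z1 + (- b1) *s z2 = d *s w1"
    unfolding z1 z2 d_def by (simp add: vec_eq_iff algebra_simps)
  have e2: "(- a2) *s z1 + a1 *s z2 = d *s w2"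
    unfolding z1 z2 d_def by (simp add: vec_eq_iff algebra_simps)
  have dnz: "d \<noteq> 0"
  proof
    assume d0: "d = 0"
    have "b2 *s z1 + (- b1) *s z2 = 0" using e1 d0 by simp
    then have "b2 = 0 \<and> - b1 = 0" using zi by blast
    moreover have "(- a2) *s z1 + a1 *s z2 = 0" using e2 d0 by simp
    then have "- a2 = 0 \<and> a1 = 0" using zi by blast
    ultimately have "z1 = 0" using z1 by simp
    then have "1 *s z1 + 0 *s z2 = 0" by simp
    then have "(1::'a) = 0 \<and> (0::'a) = 0" using zi by blast
    then show False by simp
  qed
  have "w1 = (1 / d * b2) *s z1 + (1 / d * - b1) *s z2"
  proof -
    have "w1 = (1 / d) *s (d *s w1)" using dnz by (simp add: vector_smult_assoc)
    also have "\<dots> = (1 / d) *s (b2 *s z1 + (- b1) *s z2)" by (simp only: e1)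
    also have "\<dots> = (1 / d * b2) *s z1 + (1 / d * - b1) *s z2" by (rule comb_scale)
    finally show ?thesis .
  qed
  moreover have "w2 = (1 / d * - a2) *s z1 + (1 / d * a1) *s z2"
  proof -
    have "w2 = (1 / d) *s (d *s w2)" using dnz by (simp add: vector_smult_assoc)
    also have "\<dots> = (1 / d) *s ((- a2) *s z1 + a1 *s z2)" by (simp only: e2)
    also have "\<dots> = (1 / d * - a2) *s z1 + (1 / d * a1) *s z2" by (rule comb_scale)
    finally show ?thesis .
  qed
  ultimately show ?thesis by blast
qed

lemma smult_eq0: "((a::'a::field) *s v = 0) \<longleftrightarrow> a = 0 \<or> v = 0"
  by (auto simp: vec_eq_iff)

lemma Dd_form:
  assumes F: "frob_ok q TYPE('a::field)"
  shows "a *s ((B::'a^'n^'m) *v s) + c *s vconj q (B *v t) = Dd q B (a *s s) (c^q *s t)"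
  by (simp add: Dd_def mv_scale vconj_scale[OF F] power_mult_distrib fr_inv[OF F])

lemma Dd_comb:
  assumes F: "frob_ok q TYPE('a::field)"
  shows "a *s Dd q (B::'a^'n^'m) s t + b *s Dd q B s' t' = Dd q B (a *s s + b *s s') (a^q *s t + b^q *s t')"
  by (simp add: Dd_scale[OF F] Dd_add[OF F])

lemma Dd_00:
  assumes F: "frob_ok q TYPE('a::field)"
  shows "Dd q (B::'a^'n^'m) 0 0 = 0"
  by (simp add: Dd_def vconj_zero[OF F])

lemma line_in_ext:
  fixes q :: nat and B :: "'a::field ^2 ^5" and \<theta> :: "'a \<Rightarrow> 'a"
    and b :: "('a ^2) set" and P Q :: "'a ^2"
  assumes F: "frob_ok q TYPE('a)"
    and Bns: "nonsingular B"
    and sk: "\<forall>x y. B *v x = vconj q (B *v y) \<longrightarrow> B *v x = 0"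
    and A: "field_aut \<theta>"
    and bb: "baer_subline q b"
    and Pnz: "P \<noteq> 0" and Qnz: "Q \<noteq> 0" and PQ: "\<not> same_point P Q"
    and cj: "conjugate_wrt b P Q"
  shows "span2 (semilin B \<theta> P) (vconj q (semilin B \<theta> Q)) \<in> ext_regulus q (semilin B \<theta>) b"
proof -
  note thsimps[simp] = th_0[OF A] th_eq0[OF A] th_1[OF A]
  have qp: "q > 0" using fr_pos[OF F] .
  obtain M :: "'a^2^2" where Mns: "nonsingular M"
    and bdef: "b = {c *s (M *v r) | c r. c \<noteq> 0 \<and> r \<noteq> 0 \<and> rational q r}"
    using bb unfolding baer_subline_def by blast
  obtain x1 x2 \<kappa> where knz: "\<kappa> \<noteq> 0" and P: "P = x1 *s (M *v vec2 1 0) + x2 *s (M *v vec2 0 1)"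
    and Q: "Q = \<kappa> *s (x1^q *s (M *v vec2 1 0) + x2^q *s (M *v vec2 0 1))"
    using conj_form[OF F Mns bdef cj PQ Pnz Qnz] by blast
  define m1 where "m1 = M *v vec2 1 0"
  define m2 where "m2 = M *v vec2 0 1"
  have Mv: "M *v vec2 a b = a *s m1 + b *s m2" for a b unfolding m1_def m2_def by (rule Mv2)
  have inb: "M *v r \<in> b" if "rational q r" "r \<noteq> 0" for r
  proof -
    have "\<exists>c r'. M *v r = c *s (M *v r') \<and> c \<noteq> 0 \<and> r' \<noteq> 0 \<and> rational q r'"
      using that by (intro exI[of _ 1] exI[of _ r]) simp
    then show ?thesis unfolding bdef by simp
  qed
  have m1b: "m1 \<in> b" unfolding m1_def using inb[of "vec2 1 0"] qp
    by (simp add: rational_def vconj_vec2 vec2_eq0 power_0_left)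
  have m2b: "m2 \<in> b" unfolding m2_def using inb[of "vec2 0 1"] qp
    by (simp add: rational_def vconj_vec2 vec2_eq0 power_0_left)
  have m12b: "m1 + m2 \<in> b" using inb[of "vec2 1 1"] qp
    by (simp add: rational_def vconj_vec2 vec2_eq0 Mv)
  have li: "lin_indep2 m1 m2"
    unfolding lin_indep2_def
  proof (intro allI impI)
    fix a b assume "a *s m1 + b *s m2 = 0"
    then have "M *v vec2 a b = 0" by (simp add: Mv)
    then have "vec2 a b = 0" using Mns unfolding nonsingular_def by blast
    then show "a = 0 \<and> b = 0" by (simp add: vec2_eq0)
  qed
  have dm: "det2 m1 m2 \<noteq> 0" using indep_det2[OF li] .
  define y1 where "y1 = vth \<theta> m1"
  define y2 where "y2 = vth \<theta> m2"
  have dy: "det2 y1 y2 \<noteq> 0" unfolding y1_def y2_def using det2_vth[OF A] dm by simp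
  define p where "p = vth \<theta> P"
  define q' where "q' = vth \<theta> Q"
  define T where "T = (\<lambda>x. B *v x)"
  have phi: "semilin B \<theta> x = T (vth \<theta> x)" for x by (simp add: semilin_def vth_def T_def)
  have p: "p = \<theta> x1 *s y1 + \<theta> x2 *s y2"
    unfolding p_def P y1_def y2_def m1_def m2_def by (simp add: vth_add[OF A] vth_scale[OF A])
  have q': "q' = \<theta> \<kappa> *s (\<theta> x1 ^ q *s y1 + \<theta> x2 ^ q *s y2)"
    unfolding q'_def Q y1_def y2_def m1_def m2_def
    by (simp add: vth_add[OF A] vth_scale[OF A] th_pow[OF A] th_mult[OF A] vector_add_ldistrib vector_smult_assoc)
  have pnz: "p \<noteq> 0" unfolding p_def using Pnz vth_eq0[OF A] by blast
  have qnz: "q' \<noteq> 0" unfolding q'_def using Qnz vth_eq0[OF A] by blast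
  have y12: "vth \<theta> (m1 + m2) = y1 + y2" unfolding y1_def y2_def by (simp add: vth_add[OF A])
  \<comment> \<open>the line is a line\<close>
  have isl: "is_line (span2 (T p) (vconj q (T q')))"
    unfolding is_line_def
  proof (intro exI conjI)
    show "lin_indep2 (T p) (vconj q (T q'))"
      unfolding lin_indep2_def
    proof (intro allI impI)
      fix a c assume "a *s T p + c *s vconj q (T q') = 0"
      then have "Dd q B (a *s p) (c^q *s q') = 0" using Dd_form[OF F, of a B p c q'] unfolding T_def by simp
      then have "a *s p = 0 \<and> c^q *s q' = 0" using Dd_zero[OF F Bns sk] by blast
      then have "a = 0 \<and> c^q = 0" using pnz qnz by (simp add: smult_eq0)
      then show "a = 0 \<and> c = 0" using fr_eq0[OF F] by blast
    qed
  qed simp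
  \<comment> \<open>meets every line of the opposite regulus\<close>
  have mm: "meets (span2 (T p) (vconj q (T q'))) m" if mo: "m \<in> opposite_regulus q (semilin B \<theta>) b" for m
  proof -
    obtain w1 w2 where w1r: "rational q w1" and w2r: "rational q w2" and wi: "lin_indep2 w1 w2"
      and mdef: "m = span2 w1 w2"
      using mo unfolding opposite_regulus_def is_rational_line_def by blast
    have mt: "\<forall>x\<in>b. meets m (spread_line q (semilin B \<theta>) x)"
      using mo unfolding opposite_regulus_def by blast
    have pt: "\<exists>a c \<alpha> \<beta>. (a \<noteq> 0 \<or> c \<noteq> 0) \<and> a *s w1 + c *s w2 = Dd q B (\<alpha> *s vth \<theta> y) (\<beta> *s vth \<theta> y)"
      if yb: "y \<in> b" for y
    proof -
      obtain z where z: "z \<noteq> 0" "z \<in> m" "z \<in> spread_line q (semilin B \<theta>) y"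
        using mt yb unfolding meets_def by blast
      obtain a c where ac: "z = a *s w1 + c *s w2" using z(2) unfolding mdef in_span2 by blast
      obtain \<alpha> \<beta> where ab: "z = \<alpha> *s T (vth \<theta> y) + \<beta> *s vconj q (T (vth \<theta> y))"
        using z(3) unfolding spread_line_def phi in_span2 by blast
      have zD: "z = Dd q B (\<alpha> *s vth \<theta> y) (\<beta>^q *s vth \<theta> y)"
        using trans[OF ab[unfolded T_def] Dd_form[OF F, of \<alpha> B "vth \<theta> y" \<beta> "vth \<theta> y"]] .
      have nz: "a \<noteq> 0 \<or> c \<noteq> 0" using z(1) ac by auto
      have e: "a *s w1 + c *s w2 = Dd q B (\<alpha> *s vth \<theta> y) (\<beta>^q *s vth \<theta> y)"
        using trans[OF ac[symmetric] zD] .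
      show ?thesis by (rule exI[of _ a], rule exI[of _ c], rule exI[of _ \<alpha>], rule exI[of _ "\<beta>^q"]) (use nz e in blast)
    qed
    \<comment> \<open>Step A\<close>
    obtain a1 c1 \<alpha>1 \<beta>1 where A1: "a1 \<noteq> 0 \<or> c1 \<noteq> 0" "a1 *s w1 + c1 *s w2 = Dd q B (\<alpha>1 *s y1) (\<beta>1 *s y1)"
      using pt[OF m1b] unfolding y1_def by blast
    obtain a2 c2 \<alpha>2 \<beta>2 where A2: "a2 \<noteq> 0 \<or> c2 \<noteq> 0" "a2 *s w1 + c2 *s w2 = Dd q B (\<alpha>2 *s y2) (\<beta>2 *s y2)"
      using pt[OF m2b] unfolding y2_def by blast
    have wcomb0: "a *s w1 + c *s w2 \<noteq> 0" if "a \<noteq> 0 \<or> c \<noteq> 0" for a c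
      using wi that unfolding lin_indep2_def by blast
    have ab1: "\<alpha>1 \<noteq> 0 \<or> \<beta>1 \<noteq> 0" using wcomb0[OF A1(1)] A1(2) Dd_00[OF F, of B] by auto
    have ab2: "\<alpha>2 \<noteq> 0 \<or> \<beta>2 \<noteq> 0" using wcomb0[OF A2(1)] A2(2) Dd_00[OF F, of B] by auto
    have zi: "e1 = 0 \<and> e2 = 0" if e: "e1 *s Dd q B (\<alpha>1 *s y1) (\<beta>1 *s y1) + e2 *s Dd q B (\<alpha>2 *s y2) (\<beta>2 *s y2) = 0" for e1 e2
    proof -
      have "Dd q B (e1 *s (\<alpha>1 *s y1) + e2 *s (\<alpha>2 *s y2)) (e1^q *s (\<beta>1 *s y1) + e2^q *s (\<beta>2 *s y2))
          = e1 *s Dd q B (\<alpha>1 *s y1) (\<beta>1 *s y1) + e2 *s Dd q B (\<alpha>2 *s y2) (\<beta>2 *s y2)"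
        by (rule Dd_comb[OF F, symmetric])
      also have "\<dots> = 0" by (rule e)
      finally have "Dd q B (e1 *s (\<alpha>1 *s y1) + e2 *s (\<alpha>2 *s y2)) (e1^q *s (\<beta>1 *s y1) + e2^q *s (\<beta>2 *s y2)) = 0" .
      then have h: "e1 *s (\<alpha>1 *s y1) + e2 *s (\<alpha>2 *s y2) = 0 \<and> e1^q *s (\<beta>1 *s y1) + e2^q *s (\<beta>2 *s y2) = 0"
        using Dd_zero[OF F Bns sk] by blast
      have "(e1 * \<alpha>1) *s y1 + (e2 * \<alpha>2) *s y2 = 0" using h by (simp add: vector_smult_assoc)
      then have h1: "e1 * \<alpha>1 = 0 \<and> e2 * \<alpha>2 = 0" using det2_indep[OF dy] by blast
      have "(e1^q * \<beta>1) *s y1 + (e2^q * \<beta>2) *s y2 = 0" using h by (simp add: vector_smult_assoc)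
      then have h2: "e1^q * \<beta>1 = 0 \<and> e2^q * \<beta>2 = 0" using det2_indep[OF dy] by blast
      show ?thesis using h1 h2 ab1 ab2 fr_eq0[OF F] by auto
    qed
    obtain e f g h where wz: "w1 = e *s Dd q B (\<alpha>1 *s y1) (\<beta>1 *s y1) + f *s Dd q B (\<alpha>2 *s y2) (\<beta>2 *s y2)"
      "w2 = g *s Dd q B (\<alpha>1 *s y1) (\<beta>1 *s y1) + h *s Dd q B (\<alpha>2 *s y2) (\<beta>2 *s y2)"
      using indep_pair[OF A1(2)[symmetric] A2(2)[symmetric] zi] by blast
    have ratD: "\<exists>u. w = Dd q B u u" if wr: "rational q w" and wd: "w = Dd q B s t" for w s t
    proof -
      have "Dd q B t s = Dd q B s t" using wr wd Dd_conj[OF F, of B s t] unfolding rational_def by simp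
      then have "t = s" using Dd_eq[OF F Bns sk] by blast
      then have "w = Dd q B s s" using wd by simp
      then show ?thesis by (rule exI)
    qed
    have "w1 = Dd q B (e *s (\<alpha>1 *s y1) + f *s (\<alpha>2 *s y2)) (e^q *s (\<beta>1 *s y1) + f^q *s (\<beta>2 *s y2))"
      using wz(1) Dd_comb[OF F, of e B _ _ f] by simp
    then obtain u1 where u1: "w1 = Dd q B u1 u1" using ratD[OF w1r] by blast
    have "w2 = Dd q B (g *s (\<alpha>1 *s y1) + h *s (\<alpha>2 *s y2)) (g^q *s (\<beta>1 *s y1) + h^q *s (\<beta>2 *s y2))"
      using wz(2) Dd_comb[OF F, of g B _ _ h] by simp
    then obtain u2 where u2: "w2 = Dd q B u2 u2" using ratD[OF w2r] by blast
    have wc: "a *s w1 + c *s w2 = Dd q B (a *s u1 + c *s u2) (a^q *s u1 + c^q *s u2)" for a c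
      using u1 u2 Dd_comb[OF F, of a B u1 u1 c u2 u2] by simp
    \<comment> \<open>Step B\<close>
    have inj: "a = 0 \<and> c = 0" if "a *s u1 + c *s u2 = 0" "a^q *s u1 + c^q *s u2 = 0" for a c
    proof -
      have "a *s w1 + c *s w2 = 0" using wc that Dd_00[OF F, of B] by simp
      then show ?thesis using wi unfolding lin_indep2_def by blast
    qed
    have fx: "\<exists>a c \<alpha> \<beta>. (a \<noteq> 0 \<or> c \<noteq> 0) \<and> a *s u1 + c *s u2 = \<alpha> *s y \<and> a^q *s u1 + c^q *s u2 = \<beta> *s y"
      if yy: "y \<in> {y1, y2, y1 + y2}" for y
    proof -
      obtain y' where y': "y' \<in> b" "y = vth \<theta> y'"
        using yy m1b m2b m12b y12 unfolding y1_def y2_def by auto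
      obtain a c \<alpha> \<beta> where ac: "a \<noteq> 0 \<or> c \<noteq> 0" "a *s w1 + c *s w2 = Dd q B (\<alpha> *s y) (\<beta> *s y)"
        using pt[OF y'(1)] y'(2) by blast
      have "Dd q B (a *s u1 + c *s u2) (a^q *s u1 + c^q *s u2) = Dd q B (\<alpha> *s y) (\<beta> *s y)"
        using ac(2) wc[of a c] by simp
      then have "a *s u1 + c *s u2 = \<alpha> *s y \<and> a^q *s u1 + c^q *s u2 = \<beta> *s y"
        using Dd_eq[OF F Bns sk] by blast
      then show ?thesis using ac(1) by blast
    qed
    have xi: "\<theta> x1 *s y1 + \<theta> x2 *s y2 \<noteq> 0" using pnz p by simp
    obtain a c \<alpha> \<beta> where cr: "a \<noteq> 0 \<or> c \<noteq> 0" "a *s u1 + c *s u2 = \<alpha> *s p"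
      "a^q *s u1 + c^q *s u2 = \<beta> *s (\<theta> x1 ^ q *s y1 + \<theta> x2 ^ q *s y2)"
      using core2[OF F dy inj fx xi] unfolding p[symmetric] by blast
    define \<gamma> where "\<gamma> = (\<beta> / \<theta> \<kappa>) ^ q"
    have g: "\<gamma>^q *s q' = \<beta> *s (\<theta> x1 ^ q *s y1 + \<theta> x2 ^ q *s y2)"
      unfolding \<gamma>_def q' using knz by (simp add: fr_inv[OF F] vector_smult_assoc)
    define z where "z = a *s w1 + c *s w2"
    have "z = Dd q B (\<alpha> *s p) (\<gamma>^q *s q')" unfolding z_def using wc cr g by simp
    then have "z = \<alpha> *s T p + \<gamma> *s vconj q (T q')" using Dd_form[OF F, of \<alpha> B p \<gamma> q'] unfolding T_def by simp
    then have "z \<in> span2 (T p) (vconj q (T q'))" unfolding in_span2 by blast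
    moreover have "z \<in> m" unfolding mdef z_def in_span2 by blast
    moreover have "z \<noteq> 0" unfolding z_def using wcomb0 cr(1) by blast
    ultimately show ?thesis unfolding meets_def by blast
  qed
  have phiP: "semilin B \<theta> P = T p" and phiQ: "semilin B \<theta> Q = T q'"
    unfolding p_def q'_def by (rule phi)+
  show ?thesis unfolding ext_regulus_def phiP phiQ mem_Collect_eq
  proof (intro conjI ballI)
    show "is_line (span2 (T p) (vconj q (T q')))" by (rule isl)
    fix m assume "m \<in> opposite_regulus q (semilin B \<theta>) b"
    then show "meets (span2 (T p) (vconj q (T q'))) m" by (rule mm)
  qed
qed

theorem theorem3p2:
  fixes q :: nat
    and h :: "'a::{finite,field} ^5"
    and B :: "'a ^2 ^5"
    and \<theta> :: "'a \<Rightarrow> 'a"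
    and b :: "('a ^2) set"
    and P Q :: "'a ^2"
  assumes q_pp: "\<exists>p k. prime p \<and> k > 0 \<and> q = p ^ k"
    and card: "CARD('a) = q ^ 2"
    \<comment> \<open>Sigma_inf: the hyperplane of PG(4,q) with rational equation h\<close>
    and h_rat: "rational q h" and h_nz: "h \<noteq> 0"
    \<comment> \<open>the transversal g = image of B, a line of Sigma_inf* disjoint from g^q;
        Tbar |-> T is the bijection x \<mapsto> B x^theta from l_inf onto g\<close>
    and B_nonsing: "nonsingular B"
    and g_in_Sigma: "\<forall>x. (\<Sum>i\<in>UNIV. h $ i * (B *v x) $ i) = 0"
    and g_skew: "\<forall>x y. B *v x = vconj q (B *v y) \<longrightarrow> B *v x = 0"
    and aut: "field_aut \<theta>"
    \<comment> \<open>b a Baer subline of l_inf, P,Q distinct points of l_inf, conjugate w.r.t. b\<close>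
    and b: "baer_subline q b"
    and P_nz: "P \<noteq> 0" and Q_nz: "Q \<noteq> 0" and PQ: "\<not> same_point P Q"
    and conj: "conjugate_wrt b P Q"
  shows "span2 (semilin B \<theta> P) (vconj q (semilin B \<theta> Q)) \<in> ext_regulus q (semilin B \<theta>) b
       \<and> span2 (vconj q (semilin B \<theta> P)) (semilin B \<theta> Q) \<in> ext_regulus q (semilin B \<theta>) b"
proof -
  have F: "frob_ok q TYPE('a)" by (rule frob_okI[OF q_pp card])
  have L1: "span2 (semilin B \<theta> P) (vconj q (semilin B \<theta> Q)) \<in> ext_regulus q (semilin B \<theta>) b"
    by (rule line_in_ext[OF F B_nonsing g_skew aut b P_nz Q_nz PQ conj])
  have QP: "\<not> same_point Q P" using PQ same_point_sym by blast
  have "span2 (semilin B \<theta> Q) (vconj q (semilin B \<theta> P)) \<in> ext_regulus q (semilin B \<theta>) b"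
    by (rule line_in_ext[OF F B_nonsing g_skew aut b Q_nz P_nz QP conj_sym[OF conj]])
  then have L2: "span2 (vconj q (semilin B \<theta> P)) (semilin B \<theta> Q) \<in> ext_regulus q (semilin B \<theta>) b"
    by (simp add: span2_comm)
  show ?thesis using L1 L2 by blast
qed

end
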